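(* Let $G=([n],E)$ be any graph and $F$ any atomless distribution on $[0,\infty)$. For every price vector $\mathbf{p}=(p_1,\dots,p_n)$ with $p_i>0$ and every equilibrium $\mathbf{T}\in\mathcal{N}_{\mathbf{p}}$, $$\mathcal{R}(\mathbf{p},\mathbf{T})\le \mathbb{E}\Big[\max_{I\subseteq[n]\text{ independent in }G}\ \sum_{i\in I} v_i\Big],$$ where $v_1,\dots,v_n$ are i.i.d. with distribution $F$.
   Context: Public-goods pricing game: there are $n$ buyers, the vertices of an undirected graph $G=([n],E)$; $N(i)=\{j:(i,j)\in E\}$ (so $i\notin N(i)$). Buyer $i$ has private value $v_i$; the $v_i$ are i.i.d. with atomless cumulative distribution function $F$ on $[0,\infty)$, extended by $F(\infty)=1$. If $S$ is the set of buyers who purchase and $\pi_i$ is $i$'s payment, $i$'s utility is $v_i-\pi_i$ if $i\in S$ or $S\cap N(i)\neq\emptyset$, and $-\pi_i$ otherwise; a buyer pays $p_i$ iff he purchases. An equilibrium for the price vector $\mathbf{p}$ is a threshold vector $\mathbf{T}=(T_1,\dots,T_n)\in[0,\infty]^n$ (buyer $i$ purchases iff $v_i\ge T_i$) satisfying $T_i=p_i/\prod_{j\in N(i)}F(T_j)$ for all $i$ (convention $c/0=\infty$ for $c>0$). $\mathcal{N}_{\mathbf{p}}$ denotes the set of equilibria. The expected revenue is $\mathcal{R}(\mathbf{p},\mathbf{T})=\sum_i p_i(1-F(T_i))$. *)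

theory Defs
  imports "HOL-Probability.Probability"
begin

definition undirected_graph :: "nat \<Rightarrow> (nat \<Rightarrow> nat \<Rightarrow> bool) \<Rightarrow> bool" where
  "undirected_graph n E \<longleftrightarrow> (\<forall>i<n. \<forall>j<n. E i j \<longleftrightarrow> E j i) \<and> (\<forall>i<n. \<not> E i i)"

definition nbrs :: "nat \<Rightarrow> (nat \<Rightarrow> nat \<Rightarrow> bool) \<Rightarrow> nat \<Rightarrow> nat set" where
  "nbrs n E i = {j. j < n \<and> E i j}"

definition independent_set :: "nat \<Rightarrow> (nat \<Rightarrow> nat \<Rightarrow> bool) \<Rightarrow> nat set \<Rightarrow> bool" where
  "independent_set n E I \<longleftrightarrow> I \<subseteq> {..<n} \<and> (\<forall>i\<in>I. \<forall>j\<in>I. \<not> E i j)"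

definition Fext :: "real measure \<Rightarrow> ennreal \<Rightarrow> real" where
  "Fext M t = (if t = \<infinity> then 1 else cdf M (enn2real t))"

text \<open>Equilibrium thresholds: T_i = p_i / prod_{j in N(i)} F(T_j), with c/0 = infinity
  (this is exactly ennreal division).\<close>
definition equilibrium :: "nat \<Rightarrow> (nat \<Rightarrow> nat \<Rightarrow> bool) \<Rightarrow> real measure \<Rightarrow> (nat \<Rightarrow> real)
    \<Rightarrow> (nat \<Rightarrow> ennreal) \<Rightarrow> bool" where
  "equilibrium n E M p T \<longleftrightarrow>
     (\<forall>i<n. T i = ennreal (p i) / (\<Prod>j\<in>nbrs n E i. ennreal (Fext M (T j))))"

definition revenue :: "nat \<Rightarrow> real measure \<Rightarrow> (nat \<Rightarrow> real) \<Rightarrow> (nat \<Rightarrow> ennreal) \<Rightarrow> real" where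
  "revenue n M p T = (\<Sum>i<n. p i * (1 - Fext M (T i)))"

definition max_indep_value :: "nat \<Rightarrow> (nat \<Rightarrow> nat \<Rightarrow> bool) \<Rightarrow> (nat \<Rightarrow> real) \<Rightarrow> real" where
  "max_indep_value n E v = Max {(\<Sum>i\<in>I. v i) | I. independent_set n E I}"

end

theory Submission
  imports Defs
begin

definition fI :: "ennreal \<Rightarrow> real \<Rightarrow> ennreal" where
  "fI t x = (if t < ennreal x then ennreal x else 0)"
definition hI :: "ennreal \<Rightarrow> real \<Rightarrow> ennreal" where
  "hI t x = (if ennreal x \<le> t then 1 else 0)"

lemma fI_meas[measurable]: "fI t \<in> borel_measurable borel"
  unfolding fI_def by measurable

lemma hI_meas[measurable]: "hI t \<in> borel_measurable borel"
  unfolding hI_def by measurable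

lemma prod_split3:
  fixes a :: "'b::comm_monoid_mult"
  assumes "finite A" "i \<in> A" "N \<subseteq> A" "i \<notin> N"
  shows "(\<Prod>k\<in>A. if k = i then a else if k \<in> N then b k else 1) = a * prod b N"
proof -
  have "(\<Prod>k\<in>A. if k = i then a else if k \<in> N then b k else 1)
      = (\<Prod>k\<in>insert i N. if k = i then a else if k \<in> N then b k else 1)"
    by (rule prod.mono_neutral_right) (use assms in auto)
  also have "\<dots> = a * (\<Prod>k\<in>N. if k = i then a else if k \<in> N then b k else 1)"
    using assms by (subst prod.insert) (auto intro: finite_subset)
  also have "(\<Prod>k\<in>N. if k = i then a else if k \<in> N then b k else 1) = prod b N"
    using assms by (intro prod.cong) auto
  finally show ?thesis .
qed

lemma prod_hI: "finite N \<Longrightarrow> (\<Prod>j\<in>N. hI (T j) (v j)) = (if \<forall>j\<in>N. ennreal (v j) \<le> T j then 1 else 0)"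
  by (induction N rule: finite_induct) (auto simp: hI_def)

theorem mainTheorem1:
  fixes n :: nat and E :: "nat \<Rightarrow> nat \<Rightarrow> bool" and M :: "real measure"
    and p :: "nat \<Rightarrow> real" and T :: "nat \<Rightarrow> ennreal"
  assumes graph: "undirected_graph n E"
    and distr: "real_distribution M"
    and nonneg: "measure M {..<0} = 0"
    and atomless: "\<And>x. measure M {x} = 0"
    and prices: "\<And>i. i < n \<Longrightarrow> p i > 0"
    and eq: "equilibrium n E M p T"
  shows "ennreal (revenue n M p T)
           \<le> (\<integral>\<^sup>+ v. ennreal (max_indep_value n E v) \<partial>(PiM {..<n} (\<lambda>_. M)))"
proof -
  interpret real_distribution M by (rule distr)
  interpret PS: product_sigma_finite "\<lambda>_. M"
    by (simp add: product_sigma_finite_def sigma_finite_measure_axioms)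
  have spM: "space M = UNIV" by simp
  have one: "emeasure M UNIV = 1" using emeasure_space_1 spM by simp
  define Nb where "Nb = nbrs n E"
  have NbA: "Nb i \<subseteq> {..<n}" for i by (auto simp: Nb_def nbrs_def)
  have Nbi: "i < n \<Longrightarrow> i \<notin> Nb i" for i using graph by (auto simp: Nb_def nbrs_def undirected_graph_def)
  have finNb: "finite (Nb i)" for i using NbA finite_subset by blast
  define Fk where "Fk i k = (if k = i then fI (T i) else if k \<in> Nb i then hI (T k) else (\<lambda>_. 1))" for i k
  define g where "g i v = (\<Prod>k\<in>{..<n}. Fk i k (v k))" for i v
  have Fk_meas: "Fk i k \<in> borel_measurable M" for i k
  proof -
    have "Fk i k \<in> borel_measurable borel" unfolding Fk_def by simp
    then show ?thesis using measurable_cong_sets[OF events_eq_borel refl] by simp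
  qed
  have g_eq: "g i v = fI (T i) (v i) * (\<Prod>j\<in>Nb i. hI (T j) (v j))" if "i < n" for i v
  proof -
    have "g i v = (\<Prod>k\<in>{..<n}. if k = i then fI (T i) (v i) else if k \<in> Nb i then hI (T k) (v k) else 1)"
      unfolding g_def Fk_def by (intro prod.cong) auto
    also have "\<dots> = fI (T i) (v i) * (\<Prod>j\<in>Nb i. hI (T j) (v j))"
      by (rule prod_split3) (use that NbA Nbi in auto)
    finally show ?thesis .
  qed
  have Fk_int: "(\<Prod>k\<in>{..<n}. integral\<^sup>N M (Fk i k)) = integral\<^sup>N M (fI (T i)) * (\<Prod>j\<in>Nb i. integral\<^sup>N M (hI (T j)))" if "i < n" for i
  proof -
    have "(\<Prod>k\<in>{..<n}. integral\<^sup>N M (Fk i k)) = (\<Prod>k\<in>{..<n}. if k = i then integral\<^sup>N M (fI (T i)) else if k \<in> Nb i then integral\<^sup>N M (hI (T k)) else 1)"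
      unfolding Fk_def using emeasure_space_1 spM by (intro prod.cong) auto
    also have "\<dots> = integral\<^sup>N M (fI (T i)) * (\<Prod>j\<in>Nb i. integral\<^sup>N M (hI (T j)))"
      by (rule prod_split3) (use that NbA Nbi in auto)
    finally show ?thesis .
  qed
  have int_g: "(\<integral>\<^sup>+ v. g i v \<partial>(PiM {..<n} (\<lambda>_. M))) = integral\<^sup>N M (fI (T i)) * (\<Prod>j\<in>Nb i. integral\<^sup>N M (hI (T j)))" if "i < n" for i
    unfolding g_def using PS.product_nn_integral_prod[of "{..<n}" "Fk i"] Fk_meas Fk_int[OF that] by simp
  have hI_int: "integral\<^sup>N M (hI t) = ennreal (Fext M t)" for t
  proof (cases "t = \<infinity>")
    case True
    have "hI t = (\<lambda>_. 1)" using True by (simp add: hI_def fun_eq_iff)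
    then show ?thesis using True by (simp add: Fext_def one)
  next
    case False
    then obtain r where r: "t = ennreal r" "r \<ge> 0" by (cases t) auto
    have "hI t = indicator {..r}"
      using r by (auto simp: hI_def fun_eq_iff indicator_def ennreal_le_iff2)
    moreover have "enn2real t = r" using r by simp
    ultimately show ?thesis using False
      by (simp add: Fext_def cdf_def emeasure_eq_measure)
  qed
  have term_le: "ennreal (p i * (1 - Fext M (T i))) \<le> (\<integral>\<^sup>+ v. g i v \<partial>(PiM {..<n} (\<lambda>_. M)))" if "i < n" for i
  proof (cases "T i = \<infinity>")
    case True
    then show ?thesis by (simp add: Fext_def)
  next
    case False
    define P where "P = (\<Prod>j\<in>nbrs n E i. ennreal (Fext M (T j)))"
    have TiP: "T i = ennreal (p i) / P" using eq that by (simp add: equilibrium_def P_def)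
    have P0: "P \<noteq> 0"
    proof
      assume "P = 0"
      then have "T i = \<infinity>" using TiP prices[OF that] by (simp add: ennreal_divide_eq_top_iff)
      then show False using False by simp
    qed
    have Ptop: "P \<noteq> top" by (simp add: P_def ennreal_prod_eq_top)
    have pTP: "ennreal (p i) = T i * P"
      using TiP P0 Ptop by (simp add: ennreal_divide_times top.not_eq_extremum)
    obtain t where t: "T i = ennreal t" "t \<ge> 0" using False by (cases "T i") auto
    have Fi: "Fext M (T i) = measure M {..t}" using t by (simp add: Fext_def cdf_def)
    have "1 - measure M {..t} = measure M {t<..}"
    proof -
      have "measure M (space M - {..t}) = measure M (space M) - measure M {..t}"
        by (rule finite_measure_compl) simp
      moreover have "space M - {..t} = {t<..}" by auto
      ultimately show ?thesis using prob_space spM by simp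
    qed
    then have "ennreal (1 - Fext M (T i)) = emeasure M {t<..}" by (simp add: Fi emeasure_eq_measure)
    have "T i * emeasure M {t<..} = (\<integral>\<^sup>+ x. T i * indicator {t<..} x \<partial>M)"
      by (simp add: nn_integral_cmult_indicator)
    also have "\<dots> \<le> integral\<^sup>N M (fI (T i))"
      by (intro nn_integral_mono) (auto simp: fI_def indicator_def t ennreal_less_iff intro: ennreal_leI)
    finally have fle: "T i * ennreal (1 - Fext M (T i)) \<le> integral\<^sup>N M (fI (T i))"
      using \<open>ennreal (1 - Fext M (T i)) = emeasure M {t<..}\<close> by simp
    have "ennreal (p i * (1 - Fext M (T i))) = ennreal (p i) * ennreal (1 - Fext M (T i))"
      using prices[OF that] by (intro ennreal_mult) (auto simp: Fext_def cdf_bounded_prob)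
    also have "\<dots> = T i * ennreal (1 - Fext M (T i)) * P" using pTP by (simp add: mult_ac)
    also have "\<dots> \<le> integral\<^sup>N M (fI (T i)) * P" by (intro mult_right_mono fle) simp
    also have "P = (\<Prod>j\<in>Nb i. integral\<^sup>N M (hI (T j)))" by (simp add: P_def Nb_def hI_int)
    finally show ?thesis using int_g[OF that] by simp
  qed
  have sumle: "(\<Sum>i<n. g i v) \<le> ennreal (max_indep_value n E v)" for v
  proof -
    define I where "I = {i. i<n \<and> T i < ennreal (v i) \<and> (\<forall>j\<in>Nb i. ennreal (v j) \<le> T j)}"
    have IA: "I \<subseteq> {..<n}" by (auto simp: I_def)
    have gi: "i<n \<Longrightarrow> g i v = (if i \<in> I then ennreal (v i) else 0)" for i
      using g_eq prod_hI[OF finNb] by (auto simp: I_def fI_def)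
    have vpos: "i \<in> I \<Longrightarrow> 0 \<le> v i" for i
      by (auto simp: I_def) (metis ennreal_less_zero_iff less_le_trans not_le order_less_imp_le zero_le)
    have "(\<Sum>i<n. g i v) = (\<Sum>i<n. if i \<in> I then ennreal (v i) else 0)"
      by (intro sum.cong) (auto simp: gi)
    also have "\<dots> = (\<Sum>i\<in>{..<n} \<inter> I. ennreal (v i))"
      by (simp add: sum.If_cases)
    also have "{..<n} \<inter> I = I" using IA by auto
    also have "(\<Sum>i\<in>I. ennreal (v i)) = ennreal (\<Sum>i\<in>I. v i)"
      using vpos by simp
    also have "\<dots> \<le> ennreal (max_indep_value n E v)"
    proof (rule ennreal_leI)
      have ind: "independent_set n E I"
        unfolding independent_set_def
      proof (intro conjI IA ballI notI)
        fix i j assume ij: "i \<in> I" "j \<in> I" "E i j"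
        then have "j \<in> Nb i" using IA by (auto simp: Nb_def nbrs_def)
        then have "ennreal (v j) \<le> T j" using ij by (auto simp: I_def)
        moreover have "T j < ennreal (v j)" using ij by (auto simp: I_def)
        ultimately show False by simp
      qed
      have fin: "finite {(\<Sum>i\<in>I. v i) | I. independent_set n E I}"
      proof (rule finite_subset)
        show "{(\<Sum>i\<in>I. v i) | I. independent_set n E I} \<subseteq> (\<lambda>I. sum v I) ` Pow {..<n}"
          by (auto simp: independent_set_def)
      qed simp
      show "(\<Sum>i\<in>I. v i) \<le> max_indep_value n E v"
        unfolding max_indep_value_def using ind by (intro Max_ge[OF fin]) auto
    qed
    finally show ?thesis .
  qed
  have gmeas: "g i \<in> borel_measurable (PiM {..<n} (\<lambda>_. M))" for i
    unfolding g_def using Fk_meas by measurable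
  have Fle: "Fext M t \<le> 1" for t by (simp add: Fext_def cdf_bounded_prob)
  have "ennreal (revenue n M p T) = (\<Sum>i<n. ennreal (p i * (1 - Fext M (T i))))"
  proof -
    have "0 \<le> p i * (1 - Fext M (T i))" if "i \<in> {..<n}" for i
      using prices[of i] Fle[of "T i"] that by (intro mult_nonneg_nonneg) auto
    then show ?thesis unfolding revenue_def by (subst sum_ennreal) auto
  qed
  also have "\<dots> \<le> (\<Sum>i<n. \<integral>\<^sup>+ v. g i v \<partial>(PiM {..<n} (\<lambda>_. M)))"
    by (intro sum_mono term_le) simp
  also have "\<dots> = (\<integral>\<^sup>+ v. (\<Sum>i<n. g i v) \<partial>(PiM {..<n} (\<lambda>_. M)))"
    by (rule nn_integral_sum[symmetric]) (rule gmeas)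
  also have "\<dots> \<le> (\<integral>\<^sup>+ v. ennreal (max_indep_value n E v) \<partial>(PiM {..<n} (\<lambda>_. M)))"
    by (intro nn_integral_mono sumle)
  finally show ?thesis .
qed

end
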